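(* Let $\ast$ be a continuous $t$-norm and let $\{(X_n,M_n,\ast)\}_{n\in\mathbb N}$ be a sequence of nonempty compact fuzzy metric spaces such that: (1) $\ast$ satisfies (TN1) and each $(M_n,\ast)$ is stationary; (2) there is a constant $C>0$ with $C\le\mathrm{diam}(X_n)$ for all $n$; (3) for every $0<\varepsilon<1$ there is $N(\varepsilon)\in\mathbb N$ with $\mathrm{Cov}(X_n,\varepsilon)\le N(\varepsilon)$ for all $n$. Then for every $0<\varepsilon<1$ there is a subsequence $\{X_{n_k}\}_k$ with $M_{GH}(X_{n_j},X_{n_k},t)>(1-\varepsilon)\ast(1-\varepsilon)$ for all $j,k\in\mathbb N$ and all $t>0$; consequently $\{(X_n,M_n,\ast)\}_n$ has a Cauchy subsequence with respect to $M_{GH}$.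
   Context: A continuous $t$-norm is a binary operation $\ast:[0,1]\times[0,1]\to[0,1]$ which is associative, commutative, continuous, satisfies $a\ast 1=a$, and is monotone. Property (TN1): $a-a\ast b\ge a\ast(1-b)$ for all $a,b\in[0,1]$. A fuzzy metric space $(X,M,\ast)$: $M:X\times X\times[0,\infty)\to[0,1]$ with, for all $x,y,z$ and $t,s>0$: (KM1) $M(x,y,0)=0$; (KM2) $M(x,y,t)=1$ for all $t>0$ iff $x=y$; (KM3) symmetry; (KM4) $M(x,y,t)\ast M(y,z,s)\le M(x,z,t+s)$; (KM5) $M(x,y,\cdot)$ left continuous on $[0,\infty)$. Non-Archimedean: $M(x,z,\max\{t,s\})\ge M(x,y,t)\ast M(y,z,s)$. $(M,\ast)$ is stationary if for each $x,y$ the function $t\mapsto M(x,y,t)$ is constant on $t>0$ (then we write $M(x,y)$); stationary fuzzy metrics are non-Archimedean. Balls $B(x,\varepsilon,t)=\{y:M(x,y,t)>1-\varepsilon\}$ generate the topology; "compact" refers to it. For stationary $M$, $\mathrm{diam}(X)=\inf\{M(x,y):x,y\in X\}$ and $\mathrm{Cov}(X,\varepsilon)$ is the minimal cardinality of $C\subseteq X$ with $X=\bigcup_{c\in C}\{y: M(c,y)>1-\varepsilon\}$. $H_M(A,B,t)=\min\{\inf_{a\in A}\sup_{b\in B}M(a,b,t),\ \inf_{b\in B}\sup_{a\in A}M(a,b,t)\}$. A fuzzy metric on the disjoint union $X\sqcup Y$ is admissible if it restricts to the given ones; $M_{GH}(X,Y,t)=\sup\{H_M(X,Y,t): M$ admissible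 non-Archimedean fuzzy metric on $X\sqcup Y$ with $t$-norm $\ast\}$. A sequence is Cauchy w.r.t. $M_{GH}$ if for every $t>0$, $0<\varepsilon<1$ there is $n_0$ with $M_{GH}(X_n,X_m,t)>1-\varepsilon$ for all $n,m\ge n_0$. *)

theory Defs
  imports "HOL-Analysis.Analysis"
begin

definition tnorm :: "(real \<Rightarrow> real \<Rightarrow> real) \<Rightarrow> bool" where
  "tnorm T \<longleftrightarrow>
     (\<forall>a\<in>{0..1}. \<forall>b\<in>{0..1}. T a b \<in> {0..1}) \<and>
     (\<forall>a\<in>{0..1}. \<forall>b\<in>{0..1}. \<forall>c\<in>{0..1}. T (T a b) c = T a (T b c)) \<and>
     (\<forall>a\<in>{0..1}. \<forall>b\<in>{0..1}. T a b = T b a) \<and>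
     (\<forall>a\<in>{0..1}. T a 1 = a) \<and>
     (\<forall>a\<in>{0..1}. \<forall>b\<in>{0..1}. \<forall>c\<in>{0..1}. \<forall>d\<in>{0..1}.
        a \<le> c \<longrightarrow> b \<le> d \<longrightarrow> T a b \<le> T c d)"

definition continuous_tnorm :: "(real \<Rightarrow> real \<Rightarrow> real) \<Rightarrow> bool" where
  "continuous_tnorm T \<longleftrightarrow> tnorm T \<and>
     continuous_on ({0..1} \<times> {0..1}) (\<lambda>p. T (fst p) (snd p))"

definition TN1 :: "(real \<Rightarrow> real \<Rightarrow> real) \<Rightarrow> bool" where
  "TN1 T \<longleftrightarrow> (\<forall>a\<in>{0..1}. \<forall>b\<in>{0..1}. a - T a b \<ge> T a (1 - b))"

text \<open>A fuzzy metric on the carrier set X; M is only meaningful for t \<ge> 0.\<close>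
definition fuzzy_metric ::
  "'a set \<Rightarrow> ('a \<Rightarrow> 'a \<Rightarrow> real \<Rightarrow> real) \<Rightarrow> (real \<Rightarrow> real \<Rightarrow> real) \<Rightarrow> bool" where
  "fuzzy_metric X M T \<longleftrightarrow>
     (\<forall>x\<in>X. \<forall>y\<in>X. \<forall>t\<ge>0. M x y t \<in> {0..1}) \<and>
     (\<forall>x\<in>X. \<forall>y\<in>X. M x y 0 = 0) \<and>
     (\<forall>x\<in>X. \<forall>y\<in>X. (\<forall>t>0. M x y t = 1) \<longleftrightarrow> x = y) \<and>
     (\<forall>x\<in>X. \<forall>y\<in>X. \<forall>t\<ge>0. M x y t = M y x t) \<and>
     (\<forall>x\<in>X. \<forall>y\<in>X. \<forall>z\<in>X. \<forall>t>0. \<forall>s>0. T (M x y t) (M y z s) \<le> M x z (t + s)) \<and>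
     (\<forall>x\<in>X. \<forall>y\<in>X. \<forall>t>0. (M x y \<longlongrightarrow> M x y t) (at_left t))"

definition non_archimedean ::
  "'a set \<Rightarrow> ('a \<Rightarrow> 'a \<Rightarrow> real \<Rightarrow> real) \<Rightarrow> (real \<Rightarrow> real \<Rightarrow> real) \<Rightarrow> bool" where
  "non_archimedean X M T \<longleftrightarrow>
     (\<forall>x\<in>X. \<forall>y\<in>X. \<forall>z\<in>X. \<forall>t>0. \<forall>s>0. M x z (max t s) \<ge> T (M x y t) (M y z s))"

definition stationary :: "'a set \<Rightarrow> ('a \<Rightarrow> 'a \<Rightarrow> real \<Rightarrow> real) \<Rightarrow> bool" where
  "stationary X M \<longleftrightarrow> (\<forall>x\<in>X. \<forall>y\<in>X. \<forall>t>0. \<forall>s>0. M x y t = M x y s)"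

definition fball :: "'a set \<Rightarrow> ('a \<Rightarrow> 'a \<Rightarrow> real \<Rightarrow> real) \<Rightarrow> 'a \<Rightarrow> real \<Rightarrow> real \<Rightarrow> 'a set" where
  "fball X M x \<epsilon> t = {y\<in>X. M x y t > 1 - \<epsilon>}"

definition fuzzy_open :: "'a set \<Rightarrow> ('a \<Rightarrow> 'a \<Rightarrow> real \<Rightarrow> real) \<Rightarrow> 'a set \<Rightarrow> bool" where
  "fuzzy_open X M U \<longleftrightarrow> U \<subseteq> X \<and>
     (\<forall>x\<in>U. \<exists>\<epsilon>. 0 < \<epsilon> \<and> \<epsilon> < 1 \<and> (\<exists>t>0. fball X M x \<epsilon> t \<subseteq> U))"

definition fuzzy_compact :: "'a set \<Rightarrow> ('a \<Rightarrow> 'a \<Rightarrow> real \<Rightarrow> real) \<Rightarrow> bool" where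
  "fuzzy_compact X M \<longleftrightarrow>
     (\<forall>\<U>. (\<forall>U\<in>\<U>. fuzzy_open X M U) \<and> X \<subseteq> \<Union>\<U> \<longrightarrow>
        (\<exists>\<F>\<subseteq>\<U>. finite \<F> \<and> X \<subseteq> \<Union>\<F>))"

text \<open>For stationary M we write M(x,y) = M x y 1 (any t > 0 gives the same value).\<close>
definition fdiam :: "'a set \<Rightarrow> ('a \<Rightarrow> 'a \<Rightarrow> real \<Rightarrow> real) \<Rightarrow> real" where
  "fdiam X M = Inf {M x y 1 | x y. x \<in> X \<and> y \<in> X}"

definition fCov :: "'a set \<Rightarrow> ('a \<Rightarrow> 'a \<Rightarrow> real \<Rightarrow> real) \<Rightarrow> real \<Rightarrow> nat" where
  "fCov X M \<epsilon> = (LEAST n. \<exists>C\<subseteq>X. finite C \<and> card C = n \<and>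
                      X = (\<Union>c\<in>C. {y\<in>X. M c y 1 > 1 - \<epsilon>}))"

definition H_M :: "('b \<Rightarrow> 'b \<Rightarrow> real \<Rightarrow> real) \<Rightarrow> 'b set \<Rightarrow> 'b set \<Rightarrow> real \<Rightarrow> real" where
  "H_M M A B t = min (INF a\<in>A. SUP b\<in>B. M a b t) (INF b\<in>B. SUP a\<in>A. M a b t)"

text \<open>Disjoint union X \<squnion> Y realised inside the sum type 'a + 'a.\<close>
definition admissible ::
  "(real \<Rightarrow> real \<Rightarrow> real) \<Rightarrow> 'a set \<Rightarrow> ('a \<Rightarrow> 'a \<Rightarrow> real \<Rightarrow> real) \<Rightarrow>
   'a set \<Rightarrow> ('a \<Rightarrow> 'a \<Rightarrow> real \<Rightarrow> real) \<Rightarrow> ('a + 'a \<Rightarrow> 'a + 'a \<Rightarrow> real \<Rightarrow> real) \<Rightarrow> bool" where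
  "admissible T X MX Y MY M \<longleftrightarrow>
     fuzzy_metric (Inl ` X \<union> Inr ` Y) M T \<and>
     non_archimedean (Inl ` X \<union> Inr ` Y) M T \<and>
     (\<forall>x\<in>X. \<forall>x'\<in>X. \<forall>t\<ge>0. M (Inl x) (Inl x') t = MX x x' t) \<and>
     (\<forall>y\<in>Y. \<forall>y'\<in>Y. \<forall>t\<ge>0. M (Inr y) (Inr y') t = MY y y' t)"

definition M_GH ::
  "(real \<Rightarrow> real \<Rightarrow> real) \<Rightarrow> 'a set \<Rightarrow> ('a \<Rightarrow> 'a \<Rightarrow> real \<Rightarrow> real) \<Rightarrow>
   'a set \<Rightarrow> ('a \<Rightarrow> 'a \<Rightarrow> real \<Rightarrow> real) \<Rightarrow> real \<Rightarrow> real" where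
  "M_GH T X MX Y MY t =
     Sup {H_M M (Inl ` X) (Inr ` Y) t | M. admissible T X MX Y MY M}"

definition GH_Cauchy ::
  "(real \<Rightarrow> real \<Rightarrow> real) \<Rightarrow> (nat \<Rightarrow> 'a set) \<Rightarrow> (nat \<Rightarrow> 'a \<Rightarrow> 'a \<Rightarrow> real \<Rightarrow> real) \<Rightarrow> bool" where
  "GH_Cauchy T X M \<longleftrightarrow>
     (\<forall>t>0. \<forall>\<epsilon>. 0 < \<epsilon> \<and> \<epsilon> < 1 \<longrightarrow>
        (\<exists>n0. \<forall>n\<ge>n0. \<forall>m\<ge>n0. M_GH T (X n) (M n) (X m) (M m) t > 1 - \<epsilon>))"

end

theory Submission
  imports Defs "HOL-Library.Diagonal_Subsequence"
begin

definition clip :: "real \<Rightarrow> real" where "clip a = max 0 (min 1 a)"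
definition Tc :: "(real \<Rightarrow> real \<Rightarrow> real) \<Rightarrow> real \<Rightarrow> real \<Rightarrow> real" where
  "Tc T a b = T (clip a) (clip b)"

lemma clip_id: "a \<in> {0..1} \<Longrightarrow> clip a = a" by (auto simp: clip_def)
lemma clip_range: "clip a \<in> {0..1}" by (auto simp: clip_def)
lemma clip_mono: "a \<le> b \<Longrightarrow> clip a \<le> clip b" by (auto simp: clip_def)

context
  fixes T :: "real \<Rightarrow> real \<Rightarrow> real"
  assumes tn: "tnorm T"
begin

lemma T_range: "a \<in> {0..1} \<Longrightarrow> b \<in> {0..1} \<Longrightarrow> T a b \<in> {0..1}"
  using tn unfolding tnorm_def by blast
lemma T_assoc: "a \<in> {0..1} \<Longrightarrow> b \<in> {0..1} \<Longrightarrow> c \<in> {0..1} \<Longrightarrow> T (T a b) c = T a (T b c)"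
  using tn unfolding tnorm_def by blast
lemma T_comm: "a \<in> {0..1} \<Longrightarrow> b \<in> {0..1} \<Longrightarrow> T a b = T b a"
  using tn unfolding tnorm_def by blast
lemma T_one: "a \<in> {0..1} \<Longrightarrow> T a 1 = a"
  using tn unfolding tnorm_def by blast
lemma T_one_left: "a \<in> {0..1} \<Longrightarrow> T 1 a = a"
  using T_comm[of 1 a] T_one[of a] by auto
lemma T_mono: "a \<in> {0..1} \<Longrightarrow> b \<in> {0..1} \<Longrightarrow> c \<in> {0..1} \<Longrightarrow> d \<in> {0..1} \<Longrightarrow>
   a \<le> c \<Longrightarrow> b \<le> d \<Longrightarrow> T a b \<le> T c d"
  using tn unfolding tnorm_def by blast
lemma T_le_left: "a \<in> {0..1} \<Longrightarrow> b \<in> {0..1} \<Longrightarrow> T a b \<le> a"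
  using T_mono[of a b a 1] T_one[of a] by auto
lemma T_le_right: "a \<in> {0..1} \<Longrightarrow> b \<in> {0..1} \<Longrightarrow> T a b \<le> b"
  using T_mono[of a b 1 b] T_one_left[of b] by auto
lemma T_zero: "a \<in> {0..1} \<Longrightarrow> T a 0 = 0"
  using T_le_right[of a 0] T_range[of a 0] by auto

lemma Tc_eq: "a \<in> {0..1} \<Longrightarrow> b \<in> {0..1} \<Longrightarrow> T a b = Tc T a b"
  by (simp add: Tc_def clip_id)
lemma Tc_range: "Tc T a b \<in> {0..1}"
  unfolding Tc_def by (rule T_range[OF clip_range clip_range])
lemma Tc_mono: "a \<le> c \<Longrightarrow> b \<le> d \<Longrightarrow> Tc T a b \<le> Tc T c d"
  unfolding Tc_def by (intro T_mono clip_range clip_mono)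
lemma Tc_one: "a \<in> {0..1} \<Longrightarrow> Tc T a 1 = a"
  by (simp add: Tc_def clip_id T_one)
lemma Tc_le_right: "b \<in> {0..1} \<Longrightarrow> Tc T a b \<le> b"
  unfolding Tc_def using T_le_right[OF clip_range clip_range, of a b] clip_id[of b] by simp
lemma Tc_le_left: "a \<in> {0..1} \<Longrightarrow> Tc T a b \<le> a"
  unfolding Tc_def using T_le_left[OF clip_range clip_range, of a b] clip_id[of a] by simp

lemma Tc_abel: "abel_semigroup (Tc T)"
proof
  fix a b c
  show "Tc T (Tc T a b) c = Tc T a (Tc T b c)"
    unfolding Tc_def using T_range[OF clip_range clip_range, of a b] T_range[OF clip_range clip_range, of b c]
    by (simp add: clip_id T_assoc[OF clip_range clip_range clip_range])
  show "Tc T a b = Tc T b a"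
    unfolding Tc_def by (rule T_comm[OF clip_range clip_range])
qed

end

lemma ctn_comp:
  assumes ct: "continuous_tnorm T"
    and g: "continuous_on {0..1} g" "g ` {0..1} \<subseteq> {0..1}"
    and h: "continuous_on {0..1} h" "h ` {0..1} \<subseteq> {0..1}"
  shows "continuous_on {0..1::real} (\<lambda>s. T (g s) (h s))"
proof -
  have c: "continuous_on ({0..1} \<times> {0..1}) (\<lambda>p. T (fst p) (snd p))"
    using ct unfolding continuous_tnorm_def by blast
  have "continuous_on {0..1} (\<lambda>s. (g s, h s))"
    by (intro continuous_intros g h)
  moreover have "(\<lambda>s. (g s, h s)) ` {0..1} \<subseteq> {0..1} \<times> {0..1}" using g h by auto
  ultimately show ?thesis
    using continuous_on_compose2[OF c, of "{0..1}" "\<lambda>s. (g s, h s)"] by simp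
qed

lemma ctn_eps:
  assumes ct: "continuous_tnorm T"
    and g: "continuous_on {0..1} g" "g ` {0..1} \<subseteq> {0..1}"
    and h: "continuous_on {0..1} h" "h ` {0..1} \<subseteq> {0..1}"
    and w: "w \<in> {0..1::real}" and e: "e > 0"
  shows "\<exists>d>0. \<forall>v\<in>{0..1}. \<bar>v - w\<bar> < d \<longrightarrow> \<bar>T (g v) (h v) - T (g w) (h w)\<bar> < e"
  using ctn_comp[OF ct g h] w e unfolding continuous_on_iff dist_real_def by blast

lemma ctn_eps2:
  assumes ct: "continuous_tnorm T" and m: "m \<in> {0..1::real}"
    and w: "w \<in> {0..1::real}" and e: "e > 0"
  shows "\<exists>d>0. \<forall>v\<in>{0..1}. \<bar>v - w\<bar> < d \<longrightarrow> \<bar>T m v - T m w\<bar> < e"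
  using ctn_eps[OF ct _ _ _ _ w e, of "\<lambda>_. m" "\<lambda>v. v"] m by (auto simp: image_subset_iff)

lemma ctn_eps1:
  assumes ct: "continuous_tnorm T" and m: "m \<in> {0..1::real}"
    and w: "w \<in> {0..1::real}" and e: "e > 0"
  shows "\<exists>d>0. \<forall>v\<in>{0..1}. \<bar>v - w\<bar> < d \<longrightarrow> \<bar>T v m - T w m\<bar> < e"
  using ctn_eps[OF ct _ _ _ _ w e, of "\<lambda>v. v" "\<lambda>_. m"] m by (auto simp: image_subset_iff)

lemma ctn_diag:
  assumes ct: "continuous_tnorm T" and th: "\<theta> < 1"
  shows "\<exists>\<epsilon>. 0 < \<epsilon> \<and> \<epsilon> < 1 \<and> T (1 - \<epsilon>) (1 - \<epsilon>) > \<theta>"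
proof -
  have tn: "tnorm T" using ct continuous_tnorm_def by blast
  obtain d where d: "d > 0" "\<forall>v\<in>{0..1}. \<bar>v - 1\<bar> < d \<longrightarrow> \<bar>T v v - T 1 1\<bar> < 1 - \<theta>"
    using ctn_eps[OF ct _ _ _ _ _, of "\<lambda>v. v" "\<lambda>v. v" 1 "1 - \<theta>"] th by auto
  define \<epsilon> where "\<epsilon> = min (d/2) (1/2)"
  have a: "\<bar>T (1-\<epsilon>) (1-\<epsilon>) - T 1 1\<bar> < 1 - \<theta>"
    using d unfolding \<epsilon>_def by auto
  have "T 1 1 = 1" using T_one[OF tn, of 1] by simp
  with a have "T (1-\<epsilon>) (1-\<epsilon>) > \<theta>" by linarith
  moreover have "0 < \<epsilon>" "\<epsilon> < 1" using d unfolding \<epsilon>_def by auto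
  ultimately show ?thesis by blast
qed

lemma ctn_strict:
  assumes ct: "continuous_tnorm T" and tn1: "TN1 T"
    and L: "0 < L" "L \<le> 1" and mu: "0 \<le> \<mu>" "\<mu> < 1"
  shows "T \<mu> L < L"
proof (rule ccontr)
  assume "\<not> T \<mu> L < L"
  have tn: "tnorm T" using ct continuous_tnorm_def by blast
  have L01: "L \<in> {0..1}" "\<mu> \<in> {0..1}" using L mu by auto
  have muL: "T \<mu> L = L" using \<open>\<not> T \<mu> L < L\<close> T_le_right[OF tn L01(2) L01(1)] by auto
  define F where "F = {0..1} \<inter> (\<lambda>s. T s L) -` {L}"
  have cF: "continuous_on {0..1} (\<lambda>s. T s L)"
    using ctn_comp[OF ct, of "\<lambda>s. s" "\<lambda>_. L"] L01 by (auto simp: image_subset_iff)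
  have clF: "closed F" unfolding F_def by (rule continuous_closed_preimage[OF cF]) auto
  have muF: "\<mu> \<in> F" using muL L01 unfolding F_def by auto
  have bF: "bdd_below F" unfolding F_def by (rule bdd_belowI[of _ 0]) auto
  define e where "e = Inf F"
  have eF: "e \<in> F" unfolding e_def using closed_contains_Inf[OF _ bF clF] muF by auto
  have e01: "e \<in> {0..1}" and eL: "T e L = L" using eF unfolding F_def by auto
  have "e \<le> \<mu>" unfolding e_def using cInf_lower[OF muF bF] .
  hence e1: "e < 1" using mu by auto
  have e0: "e \<noteq> 0"
  proof
    assume "e = 0"
    then have "T 0 L = 0" using T_comm[OF tn, of 0 L] T_zero[OF tn, of L] L01 by auto
    with eL \<open>e = 0\<close> L show False by auto
  qed
  have ee01: "T e e \<in> {0..1}" using T_range[OF tn e01 e01] .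
  have "T (T e e) L = L" using T_assoc[OF tn e01 e01 L01(1)] eL by simp
  hence "T e e \<in> F" using ee01 unfolding F_def by auto
  hence "e \<le> T e e" unfolding e_def using cInf_lower[OF _ bF] by blast
  hence idem: "T e e = e" using T_le_left[OF tn e01 e01] by auto
  have "e - T e e \<ge> T e (1 - e)" using tn1 e01 unfolding TN1_def by blast
  hence z: "T e (1 - e) \<le> 0" using idem by simp
  have c01: "1 - e \<in> {0..1}" using e01 by auto
  show False
  proof (cases "e \<le> 1 - e")
    case True
    have "T e e \<le> T e (1 - e)" using T_mono[OF tn e01 e01 e01 c01] True by simp
    with idem z e0 e01 show False by auto
  next
    case False
    have cT: "continuous_on {0..1} (\<lambda>v. T e v)"
      using ctn_comp[OF ct, of "\<lambda>_. e" "\<lambda>s. s"] e01 by (auto simp: image_subset_iff)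
    have "T e 0 \<le> 1 - e" using T_zero[OF tn e01] e01 by simp
    moreover have "1 - e \<le> T e 1" using T_one[OF tn e01] False by simp
    ultimately obtain z where z01: "0 \<le> z" "z \<le> 1" "T e z = 1 - e"
      using IVT'[of "\<lambda>v. T e v" 0 "1 - e" 1, OF _ _ _ cT] by auto
    have "T e (1 - e) = T e (T e z)" using z01 by simp
    also have "\<dots> = T (T e e) z" using T_assoc[OF tn e01 e01, of z] z01 by simp
    also have "\<dots> = 1 - e" using idem z01 by simp
    finally show False using z e1 by simp
  qed
qed

lemma fm_facts:
  assumes fm: "fuzzy_metric X M T" and st: "stationary X M" and tn: "tnorm T"
  shows fm_range: "\<And>x y. x \<in> X \<Longrightarrow> y \<in> X \<Longrightarrow> M x y 1 \<in> {0..1}"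
    and fm_sym: "\<And>x y. x \<in> X \<Longrightarrow> y \<in> X \<Longrightarrow> M x y 1 = M y x 1"
    and fm_refl: "\<And>x. x \<in> X \<Longrightarrow> M x x 1 = 1"
    and fm_stat: "\<And>x y t. x \<in> X \<Longrightarrow> y \<in> X \<Longrightarrow> t > 0 \<Longrightarrow> M x y t = M x y 1"
    and fm_tri: "\<And>x y z. x \<in> X \<Longrightarrow> y \<in> X \<Longrightarrow> z \<in> X \<Longrightarrow> Tc T (M x y 1) (M y z 1) \<le> M x z 1"
proof -
  note F = fm[unfolded fuzzy_metric_def]
  note F1 = F[THEN conjunct1] and F3 = F[THEN conjunct2, THEN conjunct2, THEN conjunct1]
    and F4 = F[THEN conjunct2, THEN conjunct2, THEN conjunct2, THEN conjunct1]
    and F5 = F[THEN conjunct2, THEN conjunct2, THEN conjunct2, THEN conjunct2, THEN conjunct1]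
  show r: "\<And>x y. x \<in> X \<Longrightarrow> y \<in> X \<Longrightarrow> M x y 1 \<in> {0..1}"
  proof -
    fix x y assume "x \<in> X" "y \<in> X"
    then show "M x y 1 \<in> {0..1}" using F1 by simp
  qed
  show "\<And>x y. x \<in> X \<Longrightarrow> y \<in> X \<Longrightarrow> M x y 1 = M y x 1"
  proof -
    fix x y assume "x \<in> X" "y \<in> X"
    then show "M x y 1 = M y x 1" using F4 by simp
  qed
  show s: "\<And>x y t. x \<in> X \<Longrightarrow> y \<in> X \<Longrightarrow> t > 0 \<Longrightarrow> M x y t = M x y 1"
  proof -
    fix x y t assume xy: "x \<in> X" "y \<in> X" and t: "(t::real) > 0"
    have "\<forall>t>0. \<forall>s>0. M x y t = M x y s" using st xy unfolding stationary_def by blast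
    then show "M x y t = M x y 1" using t zero_less_one by blast
  qed
  show "\<And>x. x \<in> X \<Longrightarrow> M x x 1 = 1"
  proof -
    fix x assume x: "x \<in> X"
    then have "\<forall>t>0. M x x t = 1" using F3 by simp
    then show "M x x 1 = 1" by simp
  qed
  fix x y z assume xyz: "x \<in> X" "y \<in> X" "z \<in> X"
  have "T (M x y 1) (M y z 1) \<le> M x z (1 + 1)"
    using F5 xyz zero_less_one by blast
  then show "Tc T (M x y 1) (M y z 1) \<le> M x z 1"
    using s[of x z 2] xyz Tc_eq[OF tn r r] by simp
qed

locale glue =
  fixes T :: "real \<Rightarrow> real \<Rightarrow> real"
    and X :: "'a set" and MX :: "'a \<Rightarrow> 'a \<Rightarrow> real \<Rightarrow> real"
    and Y :: "'a set" and MY :: "'a \<Rightarrow> 'a \<Rightarrow> real \<Rightarrow> real"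
    and eX :: "nat \<Rightarrow> 'a" and eY :: "nat \<Rightarrow> 'a" and N :: nat and lam :: real
  assumes tn: "tnorm T"
    and fmX: "fuzzy_metric X MX T" and fmY: "fuzzy_metric Y MY T"
    and stX: "stationary X MX" and stY: "stationary Y MY"
    and lam: "0 \<le> lam" "lam < 1"
    and Npos: "0 < N"
    and eX: "\<And>i. eX i \<in> X" and eY: "\<And>i. eY i \<in> Y"
    and d1: "\<And>i j. i < N \<Longrightarrow> j < N \<Longrightarrow> T (T lam lam) (MY (eY i) (eY j) 1) \<le> MX (eX i) (eX j) 1"
    and d2: "\<And>i j. i < N \<Longrightarrow> j < N \<Longrightarrow> T (T lam lam) (MX (eX i) (eX j) 1) \<le> MY (eY i) (eY j) 1"
begin

abbreviation TT where "TT \<equiv> Tc T"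

interpretation TT: abel_semigroup TT by (rule Tc_abel[OF tn])

definition K :: "'a \<Rightarrow> 'a \<Rightarrow> real" where
  "K x y = Max ((\<lambda>i. TT (MX x (eX i) 1) (TT lam (MY (eY i) y 1))) ` {..<N})"

definition D :: "'a + 'a \<Rightarrow> 'a + 'a \<Rightarrow> real \<Rightarrow> real" where
  "D p q t = case_sum (\<lambda>x. case_sum (\<lambda>x'. MX x x' t) (\<lambda>y. if t > 0 then K x y else 0) q)
                      (\<lambda>y. case_sum (\<lambda>x. if t > 0 then K x y else 0) (\<lambda>y'. MY y y' t) q) p"

lemma D_simps[simp]:
  "D (Inl x) (Inl x') t = MX x x' t" "D (Inr y) (Inr y') t = MY y y' t"
  "D (Inl x) (Inr y) t = (if t > 0 then K x y else 0)"
  "D (Inr y) (Inl x) t = (if t > 0 then K x y else 0)"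
  by (simp_all add: D_def)

lemma lam01: "lam \<in> {0..1}" using lam by auto

lemma K_upper: "i < N \<Longrightarrow> TT (MX x (eX i) 1) (TT lam (MY (eY i) y 1)) \<le> K x y"
  unfolding K_def by (rule Max_ge) auto

lemma K_attain: "\<exists>i<N. K x y = TT (MX x (eX i) 1) (TT lam (MY (eY i) y 1))"
proof -
  have "K x y \<in> (\<lambda>i. TT (MX x (eX i) 1) (TT lam (MY (eY i) y 1))) ` {..<N}"
    unfolding K_def by (rule Max_in) (use Npos in auto)
  then show ?thesis by auto
qed

lemma K_range: "K x y \<in> {0..1}"
  using K_attain[of x y] Tc_range[OF tn] by metis

lemma K_le_lam: "K x y \<le> lam"
proof -
  obtain i where "K x y = TT (MX x (eX i) 1) (TT lam (MY (eY i) y 1))" using K_attain by blast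
  also have "\<dots> \<le> TT lam (MY (eY i) y 1)" by (rule Tc_le_right[OF tn Tc_range[OF tn]])
  also have "\<dots> \<le> lam" by (rule Tc_le_left[OF tn lam01])
  finally show ?thesis .
qed

lemmas mX_range = fm_range[OF fmX stX tn] and mX_sym = fm_sym[OF fmX stX tn]
  and mX_refl = fm_refl[OF fmX stX tn] and mX_stat = fm_stat[OF fmX stX tn]
  and mX_tri = fm_tri[OF fmX stX tn]
lemmas mY_range = fm_range[OF fmY stY tn] and mY_sym = fm_sym[OF fmY stY tn]
  and mY_refl = fm_refl[OF fmY stY tn] and mY_stat = fm_stat[OF fmY stY tn]
  and mY_tri = fm_tri[OF fmY stY tn]

lemma LLR: assumes "x \<in> X" "y \<in> X" shows "TT (MX x y 1) (K y z) \<le> K x z"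
proof -
  obtain i where i: "i < N" "K y z = TT (MX y (eX i) 1) (TT lam (MY (eY i) z 1))" using K_attain by blast
  have "TT (MX x y 1) (K y z) = TT (TT (MX x y 1) (MX y (eX i) 1)) (TT lam (MY (eY i) z 1))"
    using i by (simp add: TT.assoc)
  also have "\<dots> \<le> TT (MX x (eX i) 1) (TT lam (MY (eY i) z 1))"
    by (rule Tc_mono[OF tn mX_tri[OF assms eX] order_refl])
  also have "\<dots> \<le> K x z" by (rule K_upper[OF i(1)])
  finally show ?thesis .
qed

lemma LRR: assumes "y \<in> Y" "z \<in> Y" shows "TT (K x y) (MY y z 1) \<le> K x z"
proof -
  obtain i where i: "i < N" "K x y = TT (MX x (eX i) 1) (TT lam (MY (eY i) y 1))" using K_attain by blast
  have "TT (K x y) (MY y z 1) = TT (MX x (eX i) 1) (TT lam (TT (MY (eY i) y 1) (MY y z 1)))"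
    using i by (simp add: TT.assoc)
  also have "\<dots> \<le> TT (MX x (eX i) 1) (TT lam (MY (eY i) z 1))"
    by (rule Tc_mono[OF tn order_refl Tc_mono[OF tn order_refl mY_tri[OF eY assms]]])
  also have "\<dots> \<le> K x z" by (rule K_upper[OF i(1)])
  finally show ?thesis .
qed

lemma LRL: assumes "x \<in> X" "z \<in> X" "y \<in> Y" shows "TT (K x y) (K z y) \<le> MX x z 1"
proof -
  obtain i where i: "i < N" "K x y = TT (MX x (eX i) 1) (TT lam (MY (eY i) y 1))" using K_attain by blast
  obtain j where j: "j < N" "K z y = TT (MX z (eX j) 1) (TT lam (MY (eY j) y 1))" using K_attain by blast
  have sy: "MY (eY j) y 1 = MY y (eY j) 1" using mY_sym eY assms by blast
  have sx: "MX z (eX j) 1 = MX (eX j) z 1" using mX_sym eX assms by blast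
  have "TT (K x y) (K z y) = TT (MX x (eX i) 1) (TT (TT (TT lam lam) (TT (MY (eY i) y 1) (MY y (eY j) 1))) (MX (eX j) z 1))"
    using i j sy sx by (simp add: TT.assoc TT.commute TT.left_commute)
  also have "\<dots> \<le> TT (MX x (eX i) 1) (TT (TT (TT lam lam) (MY (eY i) (eY j) 1)) (MX (eX j) z 1))"
    by (rule Tc_mono[OF tn order_refl Tc_mono[OF tn Tc_mono[OF tn order_refl mY_tri[OF eY assms(3) eY]] order_refl]])
  also have "TT (TT lam lam) (MY (eY i) (eY j) 1) = T (T lam lam) (MY (eY i) (eY j) 1)"
    using Tc_eq[OF tn lam01 lam01] Tc_eq[OF tn T_range[OF tn lam01 lam01] mY_range[OF eY eY]] by simp
  also have "TT (MX x (eX i) 1) (TT (T (T lam lam) (MY (eY i) (eY j) 1)) (MX (eX j) z 1))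
      \<le> TT (MX x (eX i) 1) (TT (MX (eX i) (eX j) 1) (MX (eX j) z 1))"
    by (rule Tc_mono[OF tn order_refl Tc_mono[OF tn d1[OF i(1) j(1)] order_refl]])
  also have "\<dots> \<le> TT (MX x (eX i) 1) (MX (eX i) z 1)"
    by (rule Tc_mono[OF tn order_refl mX_tri[OF eX eX assms(2)]])
  also have "\<dots> \<le> MX x z 1"
    by (rule mX_tri[OF assms(1) eX assms(2)])
  finally show ?thesis .
qed

lemma RLR: assumes "y \<in> Y" "z \<in> Y" "x \<in> X" shows "TT (K x y) (K x z) \<le> MY y z 1"
proof -
  obtain i where i: "i < N" "K x y = TT (MX x (eX i) 1) (TT lam (MY (eY i) y 1))" using K_attain by blast
  obtain j where j: "j < N" "K x z = TT (MX x (eX j) 1) (TT lam (MY (eY j) z 1))" using K_attain by blast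
  have sy: "MY (eY i) y 1 = MY y (eY i) 1" using mY_sym eY assms by blast
  have sx: "MX x (eX i) 1 = MX (eX i) x 1" using mX_sym eX assms by blast
  have "TT (K x y) (K x z) = TT (MY y (eY i) 1) (TT (TT (TT lam lam) (TT (MX (eX i) x 1) (MX x (eX j) 1))) (MY (eY j) z 1))"
    using i j sy sx by (simp add: TT.assoc TT.commute TT.left_commute)
  also have "\<dots> \<le> TT (MY y (eY i) 1) (TT (TT (TT lam lam) (MX (eX i) (eX j) 1)) (MY (eY j) z 1))"
    by (rule Tc_mono[OF tn order_refl Tc_mono[OF tn Tc_mono[OF tn order_refl mX_tri[OF eX assms(3) eX]] order_refl]])
  also have "TT (TT lam lam) (MX (eX i) (eX j) 1) = T (T lam lam) (MX (eX i) (eX j) 1)"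
    using Tc_eq[OF tn lam01 lam01] Tc_eq[OF tn T_range[OF tn lam01 lam01] mX_range[OF eX eX]] by simp
  also have "TT (MY y (eY i) 1) (TT (T (T lam lam) (MX (eX i) (eX j) 1)) (MY (eY j) z 1))
      \<le> TT (MY y (eY i) 1) (TT (MY (eY i) (eY j) 1) (MY (eY j) z 1))"
    by (rule Tc_mono[OF tn order_refl Tc_mono[OF tn d2[OF i(1) j(1)] order_refl]])
  also have "\<dots> \<le> TT (MY y (eY i) 1) (MY (eY i) z 1)"
    by (rule Tc_mono[OF tn order_refl mY_tri[OF eY eY assms(2)]])
  also have "\<dots> \<le> MY y z 1"
    by (rule mY_tri[OF assms(1) eY assms(2)])
  finally show ?thesis .
qed

end

lemma H_le_1:
  assumes fm: "fuzzy_metric (Inl ` X \<union> Inr ` Y) M T" and X: "X \<noteq> {}" and Y: "Y \<noteq> {}"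
    and t: "t \<ge> 0"
  shows "H_M M (Inl ` X) (Inr ` Y) t \<le> 1"
proof -
  note F1 = fm[unfolded fuzzy_metric_def, THEN conjunct1]
  have r: "\<And>x y. x \<in> X \<Longrightarrow> y \<in> Y \<Longrightarrow> M (Inl x) (Inr y) t \<in> {0..1}"
  proof -
    fix x y assume "x \<in> X" "y \<in> Y"
    then have "Inl x \<in> Inl ` X \<union> Inr ` Y" "Inr y \<in> Inl ` X \<union> Inr ` Y" by auto
    then show "M (Inl x) (Inr y) t \<in> {0..1}" using F1 t by blast
  qed
  obtain x0 where x0: "x0 \<in> X" using X by blast
  obtain y0 where y0: "y0 \<in> Y" using Y by blast
  have ba: "\<And>a. a \<in> X \<Longrightarrow> bdd_above ((\<lambda>b. M (Inl a) b t) ` Inr ` Y)"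
    using r by (auto intro!: bdd_aboveI[of _ 1])
  have sup_ge: "\<And>a. a \<in> X \<Longrightarrow> 0 \<le> (SUP b\<in>Inr ` Y. M (Inl a) b t)"
  proof -
    fix a assume a: "a \<in> X"
    have "M (Inl a) (Inr y0) t \<le> (SUP b\<in>Inr ` Y. M (Inl a) b t)"
      by (rule cSUP_upper[OF _ ba[OF a]]) (use y0 in auto)
    then show "0 \<le> (SUP b\<in>Inr ` Y. M (Inl a) b t)" using r[OF a y0] by auto
  qed
  have bb: "bdd_below ((\<lambda>a. SUP b\<in>Inr ` Y. M a b t) ` Inl ` X)"
    using sup_ge by (auto intro!: bdd_belowI[of _ 0])
  have "H_M M (Inl ` X) (Inr ` Y) t \<le> (INF a\<in>Inl ` X. SUP b\<in>Inr ` Y. M a b t)"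
    unfolding H_M_def by simp
  also have "\<dots> \<le> (SUP b\<in>Inr ` Y. M (Inl x0) b t)"
    by (rule cINF_lower[OF bb]) (use x0 in auto)
  also have "\<dots> \<le> 1"
    by (rule cSUP_least) (use Y r x0 in auto)
  finally show ?thesis .
qed

context glue
begin

interpretation TT: abel_semigroup TT by (rule Tc_abel[OF tn])

abbreviation U where "U \<equiv> Inl ` X \<union> Inr ` Y"

lemma U_cases:
  assumes "p \<in> U"
  obtains x where "x \<in> X" "p = Inl x" | y where "y \<in> Y" "p = Inr y"
  using assms by blast

lemma D_stat: assumes "p \<in> U" "q \<in> U" "t > 0" shows "D p q t = D p q 1"
  using assms(1)
proof (cases rule: U_cases)
  case (1 x)
  then show ?thesis using assms(2)
  proof (cases rule: U_cases[OF assms(2)])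
    case (1 x') then show ?thesis using \<open>p = Inl x\<close> \<open>x \<in> X\<close> mX_stat[of x x' t] assms(3) by simp
  next
    case (2 y) then show ?thesis using \<open>p = Inl x\<close> assms(3) by simp
  qed
next
  case (2 y)
  then show ?thesis
  proof (cases rule: U_cases[OF assms(2)])
    case (1 x') then show ?thesis using \<open>p = Inr y\<close> assms(3) by simp
  next
    case (2 y') then show ?thesis using \<open>p = Inr y\<close> \<open>y \<in> Y\<close> mY_stat[of y y' t] assms(3) by simp
  qed
qed

lemma D_range: assumes "p \<in> U" "q \<in> U" shows "D p q 1 \<in> {0..1}"
proof (cases rule: U_cases[OF assms(1)])
  case (1 x)
  then show ?thesis
  proof (cases rule: U_cases[OF assms(2)])
    case (1 x') then show ?thesis using \<open>p = Inl x\<close> \<open>x \<in> X\<close> mX_range[of x x'] by simp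
  next
    case (2 y) then show ?thesis using \<open>p = Inl x\<close> K_range[of x y] by simp
  qed
next
  case (2 y)
  then show ?thesis
  proof (cases rule: U_cases[OF assms(2)])
    case (1 x') then show ?thesis using \<open>p = Inr y\<close> K_range[of x' y] by simp
  next
    case (2 y') then show ?thesis using \<open>p = Inr y\<close> \<open>y \<in> Y\<close> mY_range[of y y'] by simp
  qed
qed

lemma D_tri: assumes "p \<in> U" "q \<in> U" "r \<in> U" shows "TT (D p q 1) (D q r 1) \<le> D p r 1"
proof (cases rule: U_cases[OF assms(1)])
  case p: (1 x)
  show ?thesis
  proof (cases rule: U_cases[OF assms(2)])
    case q: (1 x')
    show ?thesis
    proof (cases rule: U_cases[OF assms(3)])
      case r: (1 x'') show ?thesis using p q r mX_tri[of x x' x''] by simp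
    next
      case r: (2 y) show ?thesis using p q r LLR[of x x' y] by simp
    qed
  next
    case q: (2 y)
    show ?thesis
    proof (cases rule: U_cases[OF assms(3)])
      case r: (1 x'') show ?thesis using p q r LRL[of x x'' y] by simp
    next
      case r: (2 y') show ?thesis using p q r LRR[of y y' x] by simp
    qed
  qed
next
  case p: (2 y)
  show ?thesis
  proof (cases rule: U_cases[OF assms(2)])
    case q: (1 x')
    show ?thesis
    proof (cases rule: U_cases[OF assms(3)])
      case r: (1 x'')
      have "TT (K x' y) (MX x' x'' 1) = TT (MX x'' x' 1) (K x' y)"
        using TT.commute mX_sym[of x' x''] q r by simp
      then show ?thesis using p q r LLR[of x'' x' y] by simp
    next
      case r: (2 y') show ?thesis using p q r RLR[of y y' x'] by simp
    qed
  next
    case q: (2 y')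
    show ?thesis
    proof (cases rule: U_cases[OF assms(3)])
      case r: (1 x'')
      have "TT (MY y y' 1) (K x'' y') = TT (K x'' y') (MY y' y 1)"
        using TT.commute mY_sym[of y y'] p q by simp
      then show ?thesis using p q r LRR[of y' y x''] by simp
    next
      case r: (2 y'') show ?thesis using p q r mY_tri[of y y' y''] by simp
    qed
  qed
qed

lemma D_tri_T: assumes "p \<in> U" "q \<in> U" "r \<in> U" "t > 0" "s > 0" "u > 0"
  shows "T (D p q t) (D q r s) \<le> D p r u"
proof -
  have "T (D p q t) (D q r s) = TT (D p q 1) (D q r 1)"
    using D_stat assms Tc_eq[OF tn D_range D_range] by metis
  also have "\<dots> \<le> D p r 1" by (rule D_tri[OF assms(1-3)])
  also have "\<dots> = D p r u" using D_stat assms by metis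
  finally show ?thesis .
qed

lemma D_nonarch: "non_archimedean U D T"
  unfolding non_archimedean_def
proof (intro ballI allI impI)
  fix p q r t s assume "p \<in> U" "q \<in> U" "r \<in> U" "(t::real) > 0" "(s::real) > 0"
  then show "T (D p q t) (D q r s) \<le> D p r (max t s)"
    using D_tri_T[of p q r t s "max t s"] by (simp add: less_max_iff_disj)
qed

end

context glue
begin

interpretation TT: abel_semigroup TT by (rule Tc_abel[OF tn])

lemma D_fm: "fuzzy_metric U D T"
proof -
  note FX = fmX[unfolded fuzzy_metric_def] and FY = fmY[unfolded fuzzy_metric_def]
  have P1: "\<forall>p\<in>U. \<forall>q\<in>U. \<forall>t\<ge>0. D p q t \<in> {0..1}"
  proof (intro ballI allI impI)
    fix p q and t :: real assume pq: "p \<in> U" "q \<in> U" and t: "t \<ge> 0"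
    show "D p q t \<in> {0..1}"
    proof (cases "t = 0")
      case False
      have "t > 0" using False t by simp
      then show ?thesis using D_stat[OF pq, of t] D_range[OF pq] by simp
    next
      case True
      show ?thesis
      proof (cases rule: U_cases[OF pq(1)])
        case p: (1 x)
        show ?thesis
        proof (cases rule: U_cases[OF pq(2)])
          case q: (1 x') show ?thesis using p q FX[THEN conjunct2, THEN conjunct1] True by simp
        next
          case q: (2 y) show ?thesis using p q True by simp
        qed
      next
        case p: (2 y)
        show ?thesis
        proof (cases rule: U_cases[OF pq(2)])
          case q: (1 x') show ?thesis using p q True by simp
        next
          case q: (2 y') show ?thesis using p q FY[THEN conjunct2, THEN conjunct1] True by simp
        qed
      qed
    qed
  qed
  have P2: "\<forall>p\<in>U. \<forall>q\<in>U. D p q 0 = 0"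
  proof (intro ballI)
    fix p q assume pq: "p \<in> U" "q \<in> U"
    show "D p q 0 = 0"
    proof (cases rule: U_cases[OF pq(1)])
      case p: (1 x)
      show ?thesis
      proof (cases rule: U_cases[OF pq(2)])
        case q: (1 x') show ?thesis using p q FX[THEN conjunct2, THEN conjunct1] by simp
      next
        case q: (2 y) show ?thesis using p q by simp
      qed
    next
      case p: (2 y)
      show ?thesis
      proof (cases rule: U_cases[OF pq(2)])
        case q: (1 x') show ?thesis using p q by simp
      next
        case q: (2 y') show ?thesis using p q FY[THEN conjunct2, THEN conjunct1] by simp
      qed
    qed
  qed
  have P3: "\<forall>p\<in>U. \<forall>q\<in>U. (\<forall>t>0. D p q t = 1) \<longleftrightarrow> p = q"
  proof (intro ballI)
    fix p q assume pq: "p \<in> U" "q \<in> U"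
    have cross: "\<not> (\<forall>t::real>0. (if t > 0 then K x y else 0) = (1::real))" for x y
    proof
      assume A: "\<forall>t::real>0. (if t > 0 then K x y else 0) = (1::real)"
      have "K x y = 1" using A[rule_format, of 1] by simp
      then show False using K_le_lam[of x y] lam by simp
    qed
    note FX3 = FX[THEN conjunct2, THEN conjunct2, THEN conjunct1]
    note FY3 = FY[THEN conjunct2, THEN conjunct2, THEN conjunct1]
    show "(\<forall>t>0. D p q t = 1) \<longleftrightarrow> p = q"
    proof (cases rule: U_cases[OF pq(1)])
      case p: (1 x)
      show ?thesis
      proof (cases rule: U_cases[OF pq(2)])
        case q: (1 x')
        have e: "(\<forall>t>0. MX x x' t = 1) \<longleftrightarrow> x = x'"
          using bspec[OF bspec[OF FX3 p(1)] q(1)] .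
        have "(\<forall>t>0. D p q t = 1) \<longleftrightarrow> (\<forall>t>0. MX x x' t = 1)" using p(2) q(2) by simp
        also have "\<dots> \<longleftrightarrow> x = x'" by (rule e)
        also have "\<dots> \<longleftrightarrow> p = q" using p(2) q(2) by simp
        finally show ?thesis .
      next
        case q: (2 y)
        have "\<not> (\<forall>t>0. D p q t = 1)" using p(2) q(2) cross[of x y] by (simp only: D_simps not_False_eq_True)
        then show ?thesis using p(2) q(2) by simp
      qed
    next
      case p: (2 y)
      show ?thesis
      proof (cases rule: U_cases[OF pq(2)])
        case q: (1 x')
        have "\<not> (\<forall>t>0. D p q t = 1)" using p(2) q(2) cross[of x' y] by (simp only: D_simps not_False_eq_True)
        then show ?thesis using p(2) q(2) by simp
      next
        case q: (2 y')
        have e: "(\<forall>t>0. MY y y' t = 1) \<longleftrightarrow> y = y'"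
          using bspec[OF bspec[OF FY3 p(1)] q(1)] .
        have "(\<forall>t>0. D p q t = 1) \<longleftrightarrow> (\<forall>t>0. MY y y' t = 1)" using p(2) q(2) by simp
        also have "\<dots> \<longleftrightarrow> y = y'" by (rule e)
        also have "\<dots> \<longleftrightarrow> p = q" using p(2) q(2) by simp
        finally show ?thesis .
      qed
    qed
  qed
  have P4: "\<forall>p\<in>U. \<forall>q\<in>U. \<forall>t\<ge>0. D p q t = D q p t"
  proof (intro ballI allI impI)
    fix p q and t :: real assume pq: "p \<in> U" "q \<in> U" and t: "t \<ge> 0"
    show "D p q t = D q p t"
    proof (cases rule: U_cases[OF pq(1)])
      case p: (1 x)
      show ?thesis
      proof (cases rule: U_cases[OF pq(2)])
        case q: (1 x') show ?thesis using p q t FX[THEN conjunct2, THEN conjunct2, THEN conjunct2, THEN conjunct1] by simp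
      next
        case q: (2 y) show ?thesis using p q by simp
      qed
    next
      case p: (2 y)
      show ?thesis
      proof (cases rule: U_cases[OF pq(2)])
        case q: (1 x') show ?thesis using p q by simp
      next
        case q: (2 y') show ?thesis using p q t FY[THEN conjunct2, THEN conjunct2, THEN conjunct2, THEN conjunct1] by simp
      qed
    qed
  qed
  have P5: "\<forall>p\<in>U. \<forall>q\<in>U. \<forall>r\<in>U. \<forall>t>0. \<forall>s>0. T (D p q t) (D q r s) \<le> D p r (t + s)"
  proof (intro ballI allI impI)
    fix p q r and t s :: real assume "p \<in> U" "q \<in> U" "r \<in> U" "t > 0" "s > 0"
    then show "T (D p q t) (D q r s) \<le> D p r (t + s)" using D_tri_T[of p q r t s "t + s"] by simp
  qed
  have P6: "\<forall>p\<in>U. \<forall>q\<in>U. \<forall>t>0. (D p q \<longlongrightarrow> D p q t) (at_left t)"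
  proof (intro ballI allI impI)
    fix p q and t :: real assume pq: "p \<in> U" "q \<in> U" and t: "t > 0"
    have ev: "eventually (\<lambda>s. s \<in> {0<..<t}) (at_left t)" by (rule eventually_at_left_real[OF t])
    have cross: "((\<lambda>s. if s > 0 then K x y else 0) \<longlongrightarrow> (if t > 0 then K x y else 0)) (at_left t)" for x y
      using t by (intro tendsto_eventually eventually_mono[OF ev]) auto
    show "(D p q \<longlongrightarrow> D p q t) (at_left t)"
    proof (cases rule: U_cases[OF pq(1)])
      case p: (1 x)
      show ?thesis
      proof (cases rule: U_cases[OF pq(2)])
        case q: (1 x')
        have "(MX x x' \<longlongrightarrow> MX x x' t) (at_left t)"
          using p q t FX[THEN conjunct2, THEN conjunct2, THEN conjunct2, THEN conjunct2, THEN conjunct2] by blast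
        moreover have "D p q = MX x x'" using p q by (simp add: fun_eq_iff)
        ultimately show ?thesis by simp
      next
        case q: (2 y)
        have "D p q = (\<lambda>s. if s > 0 then K x y else 0)" using p q by (simp add: fun_eq_iff)
        then show ?thesis using cross[of x y] by simp
      qed
    next
      case p: (2 y)
      show ?thesis
      proof (cases rule: U_cases[OF pq(2)])
        case q: (1 x')
        have "D p q = (\<lambda>s. if s > 0 then K x' y else 0)" using p q by (simp add: fun_eq_iff)
        then show ?thesis using cross[of x' y] by simp
      next
        case q: (2 y')
        have "(MY y y' \<longlongrightarrow> MY y y' t) (at_left t)"
          using p q t FY[THEN conjunct2, THEN conjunct2, THEN conjunct2, THEN conjunct2, THEN conjunct2] by blast
        moreover have "D p q = MY y y'" using p q by (simp add: fun_eq_iff)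
        ultimately show ?thesis by simp
      qed
    qed
  qed
  show ?thesis unfolding fuzzy_metric_def using P1 P2 P3 P4 P5 P6 by blast
qed

lemma D_adm: "admissible T X MX Y MY D"
  unfolding admissible_def using D_fm D_nonarch by simp

lemma Tc_one_left: "z \<in> {0..1} \<Longrightarrow> TT 1 z = z"
  using TT.commute[of 1 z] Tc_one[OF tn] by simp

lemma D_H:
  assumes a: "a \<in> {0..1}"
    and cX: "\<And>x. x \<in> X \<Longrightarrow> \<exists>i<N. a \<le> MX (eX i) x 1"
    and cY: "\<And>y. y \<in> Y \<Longrightarrow> \<exists>i<N. a \<le> MY (eY i) y 1"
    and X: "X \<noteq> {}" and Y: "Y \<noteq> {}" and t: "t > 0"
  shows "T a lam \<le> H_M D (Inl ` X) (Inr ` Y) t"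
proof -
  have Ta: "T a lam = TT a lam" using Tc_eq[OF tn a lam01] .
  have A: "T a lam \<le> (INF p\<in>Inl ` X. SUP q\<in>Inr ` Y. D p q t)"
  proof (rule cINF_greatest)
    show "Inl ` X \<noteq> {}" using X by simp
    fix p :: "'a + 'a" assume "p \<in> Inl ` X"
    then obtain x where x: "x \<in> X" "p = Inl x" by blast
    obtain i where i: "i < N" "a \<le> MX (eX i) x 1" using cX[OF x(1)] by blast
    have ba: "bdd_above ((\<lambda>q. D p q t) ` Inr ` Y)"
      using x t K_range by (auto intro!: bdd_aboveI[of _ 1])
    have "T a lam = TT a (TT lam (MY (eY i) (eY i) 1))"
      using Ta mY_refl[OF eY] Tc_one[OF tn lam01] by simp
    also have "\<dots> \<le> TT (MX x (eX i) 1) (TT lam (MY (eY i) (eY i) 1))"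
      using i(2) mX_sym[OF x(1) eX, of i] by (intro Tc_mono[OF tn _ order_refl]) simp
    also have "\<dots> \<le> K x (eY i)" by (rule K_upper[OF i(1)])
    also have "\<dots> = D p (Inr (eY i)) t" using x t by simp
    also have "\<dots> \<le> (SUP q\<in>Inr ` Y. D p q t)"
      by (rule cSUP_upper[OF _ ba]) (use eY in auto)
    finally show "T a lam \<le> (SUP q\<in>Inr ` Y. D p q t)" .
  qed
  have B: "T a lam \<le> (INF q\<in>Inr ` Y. SUP p\<in>Inl ` X. D p q t)"
  proof (rule cINF_greatest)
    show "Inr ` Y \<noteq> {}" using Y by simp
    fix q :: "'a + 'a" assume "q \<in> Inr ` Y"
    then obtain y where y: "y \<in> Y" "q = Inr y" by blast
    obtain i where i: "i < N" "a \<le> MY (eY i) y 1" using cY[OF y(1)] by blast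
    have ba: "bdd_above ((\<lambda>p. D p q t) ` Inl ` X)"
      using y t K_range by (auto intro!: bdd_aboveI[of _ 1])
    have mr: "MY (eY i) y 1 \<in> {0..1}" using mY_range[OF eY y(1)] .
    have "T a lam = TT lam a" using Ta TT.commute by simp
    also have "\<dots> \<le> TT lam (MY (eY i) y 1)" using i(2) by (intro Tc_mono[OF tn order_refl])
    also have "\<dots> = TT (MX (eX i) (eX i) 1) (TT lam (MY (eY i) y 1))"
      using mX_refl[OF eX] Tc_one_left[OF Tc_range[OF tn]] by simp
    also have "\<dots> \<le> K (eX i) y" by (rule K_upper[OF i(1)])
    also have "\<dots> = D (Inl (eX i)) q t" using y t by simp
    also have "\<dots> \<le> (SUP p\<in>Inl ` X. D p q t)"
      by (rule cSUP_upper[OF _ ba]) (use eX in auto)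
    finally show "T a lam \<le> (SUP p\<in>Inl ` X. D p q t)" .
  qed
  show ?thesis unfolding H_M_def using A B by simp
qed

lemma D_GH:
  assumes a: "a \<in> {0..1}"
    and cX: "\<And>x. x \<in> X \<Longrightarrow> \<exists>i<N. a \<le> MX (eX i) x 1"
    and cY: "\<And>y. y \<in> Y \<Longrightarrow> \<exists>i<N. a \<le> MY (eY i) y 1"
    and X: "X \<noteq> {}" and Y: "Y \<noteq> {}" and t: "t > 0"
  shows "T a lam \<le> M_GH T X MX Y MY t"
proof -
  have bd: "bdd_above {H_M M (Inl ` X) (Inr ` Y) t | M. admissible T X MX Y MY M}"
    using H_le_1[OF _ X Y] t unfolding admissible_def by (auto intro!: bdd_aboveI[of _ 1])
  have "T a lam \<le> H_M D (Inl ` X) (Inr ` Y) t" by (rule D_H[OF assms])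
  also have "\<dots> \<le> M_GH T X MX Y MY t"
    unfolding M_GH_def by (rule cSup_upper[OF _ bd]) (use D_adm in blast)
  finally show ?thesis .
qed

end

lemma ball_open:
  assumes ct: "continuous_tnorm T" and fm: "fuzzy_metric X M T" and st: "stationary X M"
    and c: "c \<in> X"
  shows "fuzzy_open X M {y\<in>X. M c y 1 > 1 - \<epsilon>}"
  unfolding fuzzy_open_def
proof (intro conjI ballI)
  have tn: "tnorm T" using ct continuous_tnorm_def by blast
  show "{y \<in> X. 1 - \<epsilon> < M c y 1} \<subseteq> X" by blast
  fix y assume y: "y \<in> {y \<in> X. 1 - \<epsilon> < M c y 1}"
  then have yX: "y \<in> X" and my: "1 - \<epsilon> < M c y 1" by auto
  define m where "m = M c y 1"
  have m01: "m \<in> {0..1}" unfolding m_def using fm_range[OF fm st tn c yX] .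
  obtain \<delta> where d: "\<delta> > 0" "\<forall>v\<in>{0..1}. \<bar>v - 1\<bar> < \<delta> \<longrightarrow> \<bar>T m v - T m 1\<bar> < m - (1 - \<epsilon>)"
    using ctn_eps2[OF ct m01, of 1 "m - (1 - \<epsilon>)"] my unfolding m_def by auto
  have Tm1: "T m 1 = m" using T_one[OF tn m01] .
  define \<epsilon>0 where "\<epsilon>0 = min \<delta> (1/2)"
  have e0: "0 < \<epsilon>0" "\<epsilon>0 < 1" using d unfolding \<epsilon>0_def by auto
  have "fball X M y \<epsilon>0 1 \<subseteq> {y \<in> X. 1 - \<epsilon> < M c y 1}"
  proof
    fix z assume "z \<in> fball X M y \<epsilon>0 1"
    then have zX: "z \<in> X" and mz: "M y z 1 > 1 - \<epsilon>0" unfolding fball_def by auto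
    have v01: "M y z 1 \<in> {0..1}" using fm_range[OF fm st tn yX zX] .
    have "\<bar>M y z 1 - 1\<bar> < \<delta>" using mz v01 unfolding \<epsilon>0_def by auto
    then have "\<bar>T m (M y z 1) - T m 1\<bar> < m - (1 - \<epsilon>)" using d(2) v01 by blast
    then have "\<bar>T m (M y z 1) - m\<bar> < m - (1 - \<epsilon>)" using Tm1 by simp
    then have "T m (M y z 1) > 1 - \<epsilon>" by linarith
    moreover have "T m (M y z 1) \<le> M c z 1"
      using fm_tri[OF fm st tn c yX zX] Tc_eq[OF tn m01 v01] unfolding m_def by simp
    ultimately show "z \<in> {y \<in> X. 1 - \<epsilon> < M c y 1}" using zX by auto
  qed
  then show "\<exists>\<epsilon>'>0. \<epsilon>' < 1 \<and> (\<exists>t>0. fball X M y \<epsilon>' t \<subseteq> {y \<in> X. 1 - \<epsilon> < M c y 1})"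
    using e0 zero_less_one by blast
qed

lemma cover_exists:
  assumes ct: "continuous_tnorm T" and fm: "fuzzy_metric X M T" and st: "stationary X M"
    and cp: "fuzzy_compact X M" and e: "0 < \<epsilon>"
  shows "\<exists>C\<subseteq>X. finite C \<and> X = (\<Union>c\<in>C. {y\<in>X. M c y 1 > 1 - \<epsilon>})"
proof -
  have tn: "tnorm T" using ct continuous_tnorm_def by blast
  define B where "B c = {y\<in>X. M c y 1 > 1 - \<epsilon>}" for c
  have op: "\<forall>U\<in>B ` X. fuzzy_open X M U" unfolding B_def using ball_open[OF ct fm st] by blast
  have cov: "X \<subseteq> \<Union>(B ` X)"
  proof
    fix y assume y: "y \<in> X"
    have "M y y 1 = 1" using fm_refl[OF fm st tn y] .
    then have "y \<in> B y" unfolding B_def using y e by simp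
    then show "y \<in> \<Union>(B ` X)" using y by blast
  qed
  obtain F where F: "F \<subseteq> B ` X" "finite F" "X \<subseteq> \<Union>F"
  proof -
    have "(\<forall>U\<in>B ` X. fuzzy_open X M U) \<and> X \<subseteq> \<Union>(B ` X) \<longrightarrow>
        (\<exists>F\<subseteq>B ` X. finite F \<and> X \<subseteq> \<Union>F)"
      using cp unfolding fuzzy_compact_def by (rule spec)
    then have "\<exists>F\<subseteq>B ` X. finite F \<and> X \<subseteq> \<Union>F" using op cov by blast
    then show ?thesis using that by blast
  qed
  obtain C where C: "C \<subseteq> X" "finite C" "F = B ` C" using finite_subset_image[OF F(2) F(1)] by blast
  have "X = (\<Union>c\<in>C. B c)" using F(3) C unfolding B_def by auto
  then show ?thesis using C unfolding B_def by blast
qed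

lemma net_exists:
  assumes ct: "continuous_tnorm T" and fm: "fuzzy_metric X M T" and st: "stationary X M"
    and cp: "fuzzy_compact X M" and e: "0 < \<epsilon>" and ne: "X \<noteq> {}"
    and N: "fCov X M \<epsilon> \<le> N"
  shows "\<exists>f::nat \<Rightarrow> 'a. (\<forall>i. f i \<in> X) \<and> (\<forall>x\<in>X. \<exists>i<N. M (f i) x 1 > 1 - \<epsilon>)"
proof -
  let ?P = "\<lambda>n. \<exists>C\<subseteq>X. finite C \<and> card C = n \<and> X = (\<Union>c\<in>C. {y\<in>X. M c y 1 > 1 - \<epsilon>})"
  obtain C0 where C0: "C0\<subseteq>X \<and> finite C0 \<and> X = (\<Union>c\<in>C0. {y\<in>X. M c y 1 > 1 - \<epsilon>})"
    using cover_exists[OF ct fm st cp e] by (rule exE)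
  have "?P (card C0)"
    by (rule exI[of _ C0]) (use C0 in \<open>simp only: refl simp_thms\<close>)
  then have "?P (fCov X M \<epsilon>)" unfolding fCov_def by (rule LeastI)
  then obtain C where CC: "C \<subseteq> X \<and> finite C \<and> card C = fCov X M \<epsilon> \<and>
    X = (\<Union>c\<in>C. {y\<in>X. M c y 1 > 1 - \<epsilon>})" by (rule exE)
  note C = CC[THEN conjunct1] CC[THEN conjunct2, THEN conjunct1]
    CC[THEN conjunct2, THEN conjunct2, THEN conjunct1] CC[THEN conjunct2, THEN conjunct2, THEN conjunct2]
  have Xsub: "X \<subseteq> (\<Union>c\<in>C. {y\<in>X. M c y 1 > 1 - \<epsilon>})" using C(4) by (rule equalityD1)
  have Cne: "C \<noteq> {}"
  proof
    assume "C = {}"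
    then have "X \<subseteq> {}" using Xsub by blast
    then show False using ne by blast
  qed
  then have cpos: "0 < card C" using C(2) by (simp add: card_gt_0_iff)
  obtain h where h: "bij_betw h {0..<card C} C" using ex_bij_betw_nat_finite[OF C(2)] by blast
  have himg: "h ` {0..<card C} = C" using bij_betw_imp_surj_on[OF h] .
  define f where "f i = (if i < card C then h i else h 0)" for i
  have fX: "\<forall>i. f i \<in> X"
  proof
    fix i
    have "f i \<in> h ` {0..<card C}" unfolding f_def using cpos by auto
    then show "f i \<in> X" using himg C(1) by blast
  qed
  have "\<forall>x\<in>X. \<exists>i<N. M (f i) x 1 > 1 - \<epsilon>"
  proof
    fix x assume x: "x \<in> X"
    then obtain c where c: "c \<in> C" "M c x 1 > 1 - \<epsilon>" using Xsub by blast
    have "c \<in> h ` {0..<card C}" using c(1) himg by simp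
    then obtain i where i: "i < card C" "c = h i" by auto
    have "f i = c" unfolding f_def using i by simp
    moreover have "i < N" using i(1) C(3) N by simp
    ultimately show "\<exists>i<N. M (f i) x 1 > 1 - \<epsilon>" using c by blast
  qed
  then show ?thesis using fX by blast
qed

lemma diam_bound:
  assumes fm: "fuzzy_metric X M T" and st: "stationary X M" and tn: "tnorm T"
    and x: "x \<in> X" and y: "y \<in> X" and C: "C \<le> fdiam X M"
  shows "C \<le> M x y 1"
proof -
  have bb: "bdd_below {M x y 1 | x y. x \<in> X \<and> y \<in> X}"
  proof (rule bdd_belowI[of _ 0])
    fix u assume "u \<in> {M x y 1 | x y. x \<in> X \<and> y \<in> X}"
    then obtain a b where "a \<in> X" "b \<in> X" "u = M a b 1" by blast
    then show "0 \<le> u" using fm_range[OF fm st tn, of a b] by simp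
  qed
  have mem: "M x y 1 \<in> {M x y 1 | x y. x \<in> X \<and> y \<in> X}" using x y by blast
  have "fdiam X M \<le> M x y 1" unfolding fdiam_def by (rule cInf_lower[OF mem bb])
  then show ?thesis using C by simp
qed

lemma core:
  fixes T :: "real \<Rightarrow> real \<Rightarrow> real"
    and X :: "nat \<Rightarrow> 'a set"
    and M :: "nat \<Rightarrow> 'a \<Rightarrow> 'a \<Rightarrow> real \<Rightarrow> real"
    and C :: real and \<theta> :: real
  assumes tn: "continuous_tnorm T"
    and sp: "\<And>n. X n \<noteq> {} \<and> fuzzy_metric (X n) (M n) T \<and> fuzzy_compact (X n) (M n)"
    and tn1: "TN1 T"
    and stat: "\<And>n. stationary (X n) (M n)"
    and Cpos: "C > 0"
    and diam: "\<And>n. C \<le> fdiam (X n) (M n)"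
    and cov: "\<And>\<epsilon>. 0 < \<epsilon> \<Longrightarrow> \<epsilon> < 1 \<Longrightarrow> \<exists>N::nat. \<forall>n. fCov (X n) (M n) \<epsilon> \<le> N"
    and th: "\<theta> < 1"
  shows "\<exists>r::nat \<Rightarrow> nat. strict_mono r \<and>
           (\<forall>j k t. t > 0 \<longrightarrow> M_GH T (X (r j)) (M (r j)) (X (r k)) (M (r k)) t > \<theta>)"
proof -
  have tnn: "tnorm T" using tn continuous_tnorm_def by blast
  have fm: "\<And>n. fuzzy_metric (X n) (M n) T" and ne: "\<And>n. X n \<noteq> {}"
    and cp: "\<And>n. fuzzy_compact (X n) (M n)" using sp by blast+
  obtain \<epsilon> where e: "0 < \<epsilon>" "\<epsilon> < 1" "T (1-\<epsilon>) (1-\<epsilon>) > \<theta>" using ctn_diag[OF tn th] by blast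
  define lam where "lam = 1 - \<epsilon>"
  have lam: "0 \<le> lam" "lam < 1" "lam \<in> {0..1}" using e unfolding lam_def by auto
  obtain N0 where N0: "\<And>n. fCov (X n) (M n) \<epsilon> \<le> N0" using cov[OF e(1) e(2)] by blast
  have "\<forall>n. \<exists>f. (\<forall>i. f i \<in> X n) \<and> (\<forall>x\<in>X n. \<exists>i<N0. M n (f i) x 1 > 1 - \<epsilon>)"
  proof
    fix n show "\<exists>f. (\<forall>i. f i \<in> X n) \<and> (\<forall>x\<in>X n. \<exists>i<N0. M n (f i) x 1 > 1 - \<epsilon>)"
      by (rule net_exists[OF tn fm[of n] stat[of n] cp[of n] e(1) ne[of n] N0[of n]])
  qed
  then obtain E where E: "\<forall>n. (\<forall>i. E n i \<in> X n) \<and> (\<forall>x\<in>X n. \<exists>i<N0. M n (E n i) x 1 > 1 - \<epsilon>)"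
    by (rule choice[THEN exE])
  have EX: "\<And>n i. E n i \<in> X n" using E by blast
  have Ecov: "\<And>n x. x \<in> X n \<Longrightarrow> \<exists>i<N0. M n (E n i) x 1 > 1 - \<epsilon>" using E by blast
  have Npos: "0 < N0"
  proof -
    obtain x where "x \<in> X 0" using ne by blast
    then show ?thesis using Ecov[of x 0] by auto
  qed
  define d where "d n = (\<lambda>p::nat\<times>nat. M n (E n (fst p)) (E n (snd p)) 1)" for n
  define B where "B = {..<N0} \<times> {..<N0}"
  have d01: "\<And>n p. d n p \<in> {0..1}" unfolding d_def using fm_range[OF fm stat tnn EX EX] by blast
  have dC: "\<And>n p. C \<le> d n p" unfolding d_def using diam_bound[OF fm stat tnn EX EX diam] by blast
  have "\<forall>\<delta>\<subseteq>B. \<exists>l::nat\<times>nat\<Rightarrow>real. \<exists>r::nat\<Rightarrow>nat. strict_mono r \<and>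
      (\<forall>e>0. eventually (\<lambda>n. \<forall>i\<in>\<delta>. dist (d (r n) i) (l i) < e) sequentially)"
  proof (rule compact_lemma_general[where proj="\<lambda>f p. f p" and unproj="\<lambda>f. f"])
    show "finite B" unfolding B_def by simp
    fix k
    have "(\<lambda>x. x k) ` range d \<subseteq> {0..1}" using d01 by blast
    then show "bounded ((\<lambda>x. x k) ` range d)" by (rule bounded_subset[OF bounded_closed_interval])
  qed auto
  then obtain l r where lr1: "strict_mono r"
    and lr2: "\<And>e. e > 0 \<Longrightarrow> eventually (\<lambda>n. \<forall>i\<in>B. dist (d (r n) i) (l i) < e) sequentially"
    by blast
  define mu where "mu = T lam lam"
  have mu01: "mu \<in> {0..1}" unfolding mu_def by (rule T_range[OF tnn lam(3) lam(3)])
  have mu1: "mu < 1" using T_le_left[OF tnn lam(3) lam(3)] lam unfolding mu_def by simp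
  have close: "\<And>p e. p \<in> B \<Longrightarrow> e > 0 \<Longrightarrow> \<exists>n. \<bar>d (r n) p - l p\<bar> < e"
  proof -
    fix p and e :: real assume p: "p \<in> B" and e: "e > 0"
    obtain n where "\<forall>i\<in>B. dist (d (r n) i) (l i) < e"
      using eventually_happens[OF lr2[OF e]] by auto
    then show "\<exists>n. \<bar>d (r n) p - l p\<bar> < e" using p by (auto simp: dist_real_def)
  qed
  have lC: "C \<le> l p" if p: "p \<in> B" for p
  proof (rule ccontr)
    assume "\<not> C \<le> l p"
    then obtain n where "\<bar>d (r n) p - l p\<bar> < C - l p" using close[OF p, of "C - l p"] by auto
    then show False using dC[of "r n" p] by linarith
  qed
  have l1: "l p \<le> 1" if p: "p \<in> B" for p
  proof (rule ccontr)
    assume "\<not> l p \<le> 1"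
    then obtain n where "\<bar>d (r n) p - l p\<bar> < l p - 1" using close[OF p, of "l p - 1"] by auto
    then show False using d01[of "r n" p] by auto
  qed
  have R: "\<forall>p\<in>B. \<exists>e>0. \<forall>u\<in>{0..1}. \<forall>v\<in>{0..1}. \<bar>u - l p\<bar> < e \<longrightarrow> \<bar>v - l p\<bar> < e \<longrightarrow> T mu u < v"
  proof
    fix p assume p: "p \<in> B"
    have lpos: "0 < l p" using lC[OF p] Cpos by simp
    have l01: "l p \<in> {0..1}" using lpos l1[OF p] by simp
    have s: "T mu (l p) < l p" using ctn_strict[OF tn tn1 lpos l1[OF p], of mu] mu01 mu1 by simp
    define g where "g = (l p - T mu (l p)) / 2"
    have g: "g > 0" using s unfolding g_def by simp
    obtain \<delta> where dl: "\<delta> > 0" "\<forall>v\<in>{0..1}. \<bar>v - l p\<bar> < \<delta> \<longrightarrow> \<bar>T mu v - T mu (l p)\<bar> < g"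
      using ctn_eps2[OF tn mu01 l01 g] by blast
    show "\<exists>e>0. \<forall>u\<in>{0..1}. \<forall>v\<in>{0..1}. \<bar>u - l p\<bar> < e \<longrightarrow> \<bar>v - l p\<bar> < e \<longrightarrow> T mu u < v"
    proof (intro exI[of _ "min \<delta> g"] conjI ballI impI)
      show "0 < min \<delta> g" using dl g by simp
      fix u v :: real assume u: "u \<in> {0..1}" and v: "v \<in> {0..1}"
        and uc: "\<bar>u - l p\<bar> < min \<delta> g" and vc: "\<bar>v - l p\<bar> < min \<delta> g"
      have "\<bar>T mu u - T mu (l p)\<bar> < g" using dl(2) u uc by simp
      then have a1: "T mu u < T mu (l p) + g" by (simp only: abs_less_iff) linarith
      have "\<bar>v - l p\<bar> < g" using vc by simp
      then have a2: "l p - g < v" by (simp only: abs_less_iff) linarith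
      have "T mu (l p) + g = l p - g" unfolding g_def by (simp add: field_simps)
      then show "T mu u < v" using a1 a2 by linarith
    qed
  qed
  then obtain ef where ef: "\<forall>p\<in>B. ef p > 0 \<and> (\<forall>u\<in>{0..1}. \<forall>v\<in>{0..1}. \<bar>u - l p\<bar> < ef p \<longrightarrow> \<bar>v - l p\<bar> < ef p \<longrightarrow> T mu u < v)"
    using bchoice[OF R] by blast
  have "eventually (\<lambda>n. \<forall>p\<in>B. \<bar>d (r n) p - l p\<bar> < ef p) sequentially"
  proof (rule eventually_ball_finite)
    show "finite B" unfolding B_def by simp
    show "\<forall>p\<in>B. eventually (\<lambda>n. \<bar>d (r n) p - l p\<bar> < ef p) sequentially"
    proof
      fix p assume p: "p \<in> B"
      show "eventually (\<lambda>n. \<bar>d (r n) p - l p\<bar> < ef p) sequentially"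
        using lr2[of "ef p"] ef p by (auto elim!: eventually_mono simp: dist_real_def)
    qed
  qed
  then obtain n0 where n0: "\<And>n. n \<ge> n0 \<Longrightarrow> \<forall>p\<in>B. \<bar>d (r n) p - l p\<bar> < ef p"
    unfolding eventually_sequentially by blast
  define r' where "r' n = r (n + n0)" for n
  have smr': "strict_mono r'" using lr1 unfolding strict_mono_def r'_def by simp
  have key: "T mu (d (r' k) (i, i')) < d (r' j) (i, i')" if "i < N0" "i' < N0" for j k i i'
  proof -
    have p: "(i, i') \<in> B" unfolding B_def using that by simp
    have "\<bar>d (r' k) (i, i') - l (i, i')\<bar> < ef (i, i')" using n0[of "k + n0"] p unfolding r'_def by simp
    moreover have "\<bar>d (r' j) (i, i') - l (i, i')\<bar> < ef (i, i')" using n0[of "j + n0"] p unfolding r'_def by simp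
    ultimately show ?thesis using ef p d01 by blast
  qed
  show ?thesis
  proof (intro exI[of _ r'] conjI allI impI smr')
    fix j k and t :: real assume t: "t > 0"
    have G: "glue T (X (r' j)) (M (r' j)) (X (r' k)) (M (r' k)) (E (r' j)) (E (r' k)) N0 lam"
    proof (rule glue.intro)
      show "tnorm T" by (rule tnn)
      show "fuzzy_metric (X (r' j)) (M (r' j)) T" by (rule fm)
      show "fuzzy_metric (X (r' k)) (M (r' k)) T" by (rule fm)
      show "stationary (X (r' j)) (M (r' j))" by (rule stat)
      show "stationary (X (r' k)) (M (r' k))" by (rule stat)
      show "0 \<le> lam" "lam < 1" by (rule lam(1), rule lam(2))
      show "0 < N0" by (rule Npos)
      show "\<And>i. E (r' j) i \<in> X (r' j)" by (rule EX)
      show "\<And>i. E (r' k) i \<in> X (r' k)" by (rule EX)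
      show "\<And>i i'. i < N0 \<Longrightarrow> i' < N0 \<Longrightarrow>
          T (T lam lam) (M (r' k) (E (r' k) i) (E (r' k) i') 1) \<le> M (r' j) (E (r' j) i) (E (r' j) i') 1"
        using key[of _ _ k j] unfolding d_def mu_def by (simp add: less_imp_le)
      show "\<And>i i'. i < N0 \<Longrightarrow> i' < N0 \<Longrightarrow>
          T (T lam lam) (M (r' j) (E (r' j) i) (E (r' j) i') 1) \<le> M (r' k) (E (r' k) i) (E (r' k) i') 1"
        using key[of _ _ j k] unfolding d_def mu_def by (simp add: less_imp_le)
    qed
    have cX: "\<And>x. x \<in> X (r' j) \<Longrightarrow> \<exists>i<N0. lam \<le> M (r' j) (E (r' j) i) x 1"
      using Ecov unfolding lam_def by (meson less_imp_le)
    have cY: "\<And>y. y \<in> X (r' k) \<Longrightarrow> \<exists>i<N0. lam \<le> M (r' k) (E (r' k) i) y 1"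
      using Ecov unfolding lam_def by (meson less_imp_le)
    have "T lam lam \<le> M_GH T (X (r' j)) (M (r' j)) (X (r' k)) (M (r' k)) t"
      by (rule glue.D_GH[OF G lam(3) cX cY ne ne t])
    then show "\<theta> < M_GH T (X (r' j)) (M (r' j)) (X (r' k)) (M (r' k)) t"
      using e(3) unfolding lam_def by simp
  qed
qed

theorem mainTheorem10:
  fixes T :: "real \<Rightarrow> real \<Rightarrow> real"
    and X :: "nat \<Rightarrow> 'a set"
    and M :: "nat \<Rightarrow> 'a \<Rightarrow> 'a \<Rightarrow> real \<Rightarrow> real"
    and C :: real
  assumes tn: "continuous_tnorm T"
    and sp: "\<And>n. X n \<noteq> {} \<and> fuzzy_metric (X n) (M n) T \<and> fuzzy_compact (X n) (M n)"
    and tn1: "TN1 T"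
    and stat: "\<And>n. stationary (X n) (M n)"
    and Cpos: "C > 0"
    and diam: "\<And>n. C \<le> fdiam (X n) (M n)"
    and cov: "\<And>\<epsilon>. 0 < \<epsilon> \<Longrightarrow> \<epsilon> < 1 \<Longrightarrow> \<exists>N::nat. \<forall>n. fCov (X n) (M n) \<epsilon> \<le> N"
  shows "(\<forall>\<epsilon>. 0 < \<epsilon> \<and> \<epsilon> < 1 \<longrightarrow>
            (\<exists>r::nat \<Rightarrow> nat. strict_mono r \<and>
               (\<forall>j k t. t > 0 \<longrightarrow>
                  M_GH T (X (r j)) (M (r j)) (X (r k)) (M (r k)) t > T (1 - \<epsilon>) (1 - \<epsilon>))))
       \<and> (\<exists>r::nat \<Rightarrow> nat. strict_mono r \<and> GH_Cauchy T (X \<circ> r) (M \<circ> r))"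
proof
  have tnn: "tnorm T" using tn continuous_tnorm_def by blast
  show "\<forall>\<epsilon>. 0 < \<epsilon> \<and> \<epsilon> < 1 \<longrightarrow>
            (\<exists>r::nat \<Rightarrow> nat. strict_mono r \<and>
               (\<forall>j k t. t > 0 \<longrightarrow>
                  M_GH T (X (r j)) (M (r j)) (X (r k)) (M (r k)) t > T (1 - \<epsilon>) (1 - \<epsilon>)))"
  proof (intro allI impI)
    fix \<epsilon> :: real assume e: "0 < \<epsilon> \<and> \<epsilon> < 1"
    have e01: "1 - \<epsilon> \<in> {0..1}" using e by simp
    have th1: "T (1 - \<epsilon>) (1 - \<epsilon>) < 1" using T_le_left[OF tnn e01 e01] e by simp
    show "\<exists>r::nat \<Rightarrow> nat. strict_mono r \<and>
               (\<forall>j k t. t > 0 \<longrightarrow>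
                  M_GH T (X (r j)) (M (r j)) (X (r k)) (M (r k)) t > T (1 - \<epsilon>) (1 - \<epsilon>))"
      using core[OF tn sp tn1 stat Cpos diam cov th1] by simp
  qed
  define P where "P n s \<longleftrightarrow> (\<forall>j k t. t > 0 \<longrightarrow>
      M_GH T (X (s j)) (M (s j)) (X (s k)) (M (s k)) t > 1 - 1 / real (Suc n))" for n and s :: "nat \<Rightarrow> nat"
  interpret S: subseqs P
  proof
    fix n and s :: "nat \<Rightarrow> nat" assume s: "strict_mono s"
    have th: "1 - 1 / real (Suc n) < 1" by simp
    have covs: "\<exists>N::nat. \<forall>m. fCov ((X \<circ> s) m) ((M \<circ> s) m) \<epsilon> \<le> N" if e0: "0 < \<epsilon>" "\<epsilon> < 1" for \<epsilon>
    proof -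
      obtain N where "\<forall>m. fCov (X m) (M m) \<epsilon> \<le> N" using cov[OF e0] by blast
      then show ?thesis by auto
    qed
    have "\<exists>r::nat\<Rightarrow>nat. strict_mono r \<and> (\<forall>j k t. t > 0 \<longrightarrow>
        M_GH T ((X \<circ> s) (r j)) ((M \<circ> s) (r j)) ((X \<circ> s) (r k)) ((M \<circ> s) (r k)) t > 1 - 1 / real (Suc n))"
    proof (rule core[OF tn _ tn1 _ Cpos _ covs th])
      show "\<And>m. (X \<circ> s) m \<noteq> {} \<and> fuzzy_metric ((X \<circ> s) m) ((M \<circ> s) m) T \<and> fuzzy_compact ((X \<circ> s) m) ((M \<circ> s) m)"
        using sp by simp
      show "\<And>m. stationary ((X \<circ> s) m) ((M \<circ> s) m)" using stat by simp
      show "\<And>m. C \<le> fdiam ((X \<circ> s) m) ((M \<circ> s) m)" using diam by simp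
    qed
    then obtain r :: "nat \<Rightarrow> nat" where rr: "strict_mono r \<and> (\<forall>j k t. t > 0 \<longrightarrow>
        M_GH T ((X \<circ> s) (r j)) ((M \<circ> s) (r j)) ((X \<circ> s) (r k)) ((M \<circ> s) (r k)) t > 1 - 1 / real (Suc n))"
      by (rule exE)
    note r = rr[THEN conjunct1] rr[THEN conjunct2]
    have "P n (s \<circ> r)" unfolding P_def using r(2) by simp
    then show "\<exists>r'. strict_mono r' \<and> P n (s \<circ> r')" using r(1) by blast
  qed
  have stable: "P n (s \<circ> r)" if "strict_mono r" "P n s" for r s n
    using that(2) unfolding P_def by simp
  have hold: "P k (S.diagseq \<circ> ((+) (Suc k)))" for k
    by (rule S.diagseq_holds) (rule stable)
  show "\<exists>r::nat \<Rightarrow> nat. strict_mono r \<and> GH_Cauchy T (X \<circ> r) (M \<circ> r)"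
  proof (intro exI[of _ S.diagseq] conjI)
    show "strict_mono S.diagseq" by (rule S.subseq_diagseq)
    show "GH_Cauchy T (X \<circ> S.diagseq) (M \<circ> S.diagseq)"
      unfolding GH_Cauchy_def
    proof (intro allI impI)
      fix t :: real and \<epsilon> :: real assume t: "t > 0" and e: "0 < \<epsilon> \<and> \<epsilon> < 1"
      obtain k where k: "inverse (real (Suc k)) < \<epsilon>" using reals_Archimedean e by blast
      show "\<exists>n0. \<forall>n\<ge>n0. \<forall>m\<ge>n0. 1 - \<epsilon> < M_GH T ((X \<circ> S.diagseq) n) ((M \<circ> S.diagseq) n) ((X \<circ> S.diagseq) m) ((M \<circ> S.diagseq) m) t"
      proof (intro exI[of _ "Suc k"] allI impI)
        fix n m assume n: "Suc k \<le> n" and m: "Suc k \<le> m"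
        have "1 - 1 / real (Suc k) < M_GH T (X (S.diagseq (Suc k + (n - Suc k)))) (M (S.diagseq (Suc k + (n - Suc k))))
            (X (S.diagseq (Suc k + (m - Suc k)))) (M (S.diagseq (Suc k + (m - Suc k)))) t"
          using hold[of k] t unfolding P_def by simp
        moreover have "Suc k + (n - Suc k) = n" "Suc k + (m - Suc k) = m" using n m by simp_all
        moreover have "1 - \<epsilon> < 1 - 1 / real (Suc k)" using k by (simp add: inverse_eq_divide)
        ultimately show "1 - \<epsilon> < M_GH T ((X \<circ> S.diagseq) n) ((M \<circ> S.diagseq) n) ((X \<circ> S.diagseq) m) ((M \<circ> S.diagseq) m) t"
          by simp
      qed
    qed
  qed
qed

end
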